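(* Let $k\ge 1$, let $z_1,\dots,z_k\in\mathbb{C}$ be pairwise distinct with $|z_j|\le 1$ and $z_j\neq 1$ for $j=1,\dots,k$, and let $n,n_1,\dots,n_k\ge 1$ be integers with $n\ge 2$ and $\sum_{j=1}^k n_j\ge kn$. Let $$p(z)=(z-1)^n\prod_{j=1}^{k}(z-z_j)^{n_j},\quad z\in\mathbb{C}.$$ Then there exists $\zeta\neq 1$ such that $p'(\zeta)=0$ and $|\zeta-1/2|\le 1/2$. *)

theory Defs
  imports "HOL-Analysis.Analysis"
begin

end

theory Submission
  imports Defs "HOL-Computational_Algebra.Computational_Algebra"
begin

lemma re_inv_le:
  fixes a :: complex
  assumes "norm (a + 1) \<le> 1" "a \<noteq> 0"
  shows "Re (1/a) \<le> -1/2"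
proof -
  have s: "(Re a)\<^sup>2 + (Im a)\<^sup>2 > 0" proof -
    have "(norm a)\<^sup>2 > 0" using assms(2) by simp
    then show ?thesis by (simp only: cmod_power2)
  qed
  have "(norm (a+1))\<^sup>2 \<le> 1" by (rule power_le_one[OF norm_ge_zero assms(1)])
  then have "(Re a+1)\<^sup>2 + (Im a)\<^sup>2 \<le> 1" by (simp add: cmod_power2)
  then have h: "Re a \<le> -((Re a)\<^sup>2 + (Im a)\<^sup>2)/2" by (simp add: power2_eq_square algebra_simps)
  have "Re (1/a) = Re a / ((Re a)\<^sup>2 + (Im a)\<^sup>2)" by (simp add: Re_divide)
  also have "\<dots> \<le> -1/2" using h pos_divide_le_eq[OF s, of "Re a" "-1/2"] by linarith
  finally show ?thesis .
qed

lemma disk: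
  fixes v :: complex
  assumes "Re v \<le> -1"
  shows "norm (1 + 1/v - 1/2) \<le> 1/2"
proof -
  have v0: "v \<noteq> 0" using assms by auto
  have e: "1 + 1/v - 1/2 = (v + 2) / (2 * v)" using v0 by (simp add: field_simps)
  have "(norm (v+2))\<^sup>2 \<le> (norm v)\<^sup>2"
    unfolding cmod_power2 using assms by (simp add: power2_eq_square algebra_simps)
  then have "norm (v+2) \<le> norm v" by (simp add: power2_le_iff_abs_le)
  then show ?thesis unfolding e using v0 by (simp add: norm_divide norm_mult divide_le_eq)
qed


lemma prod_lin_coeffs:
  fixes c :: "'a \<Rightarrow> complex"
  assumes "finite A"
  shows "degree (\<Prod>i\<in>A. [:-c i,1:]) = card A \<and> coeff (\<Prod>i\<in>A. [:-c i,1:]) (card A) = 1 \<and>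
         (A \<noteq> {} \<longrightarrow> coeff (\<Prod>i\<in>A. [:-c i,1:]) (card A - 1) = - (\<Sum>i\<in>A. c i))"
  using assms
proof (induction A rule: finite_induct)
  case empty
  then show ?case by simp
next
  case (insert x F)
  define P where "P = (\<Prod>i\<in>F. [:-c i,1:])"
  have eq: "(\<Prod>i\<in>insert x F. [:-c i,1:]) = smult (- c x) P + pCons 0 P"
    using insert by (simp add: P_def mult_pCons_left)
  have P0: "P \<noteq> 0" using insert.IH unfolding P_def by (metis coeff_0 zero_neq_one)
  have pi: "(\<Prod>i\<in>insert x F. [:-c i,1:]) = [:-c x,1:] * P"
    unfolding P_def using insert.hyps by (rule prod.insert)
  have deg: "degree (\<Prod>i\<in>insert x F. [:-c i,1:]) = Suc (card F)"
    unfolding pi using insert.IH P0 unfolding P_def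
    by (subst degree_mult_eq) auto
  have c1: "coeff (\<Prod>i\<in>insert x F. [:-c i,1:]) (Suc (card F)) = 1"
    unfolding eq using insert.IH by (simp add: P_def coeff_eq_0)
  have c2: "coeff (\<Prod>i\<in>insert x F. [:-c i,1:]) (card F) = - (\<Sum>i\<in>insert x F. c i)"
  proof (cases "F = {}")
    case True then show ?thesis by simp
  next
    case False
    then have "card F \<ge> 1" using insert.hyps(1) by (simp add: Suc_leI card_gt_0_iff)
    then obtain N where N: "card F = Suc N" by (cases "card F") auto
    show ?thesis unfolding eq using insert.IH False N insert.hyps by (simp add: P_def)
  qed
  show ?case using deg c1 c2 insert.hyps by simp
qed

theorem corollary1:
  fixes k n :: nat and z :: "nat \<Rightarrow> complex" and m :: "nat \<Rightarrow> nat"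
  assumes "k \<ge> 1"
    and "inj_on z {1..k}"
    and "\<And>j. j \<in> {1..k} \<Longrightarrow> norm (z j) \<le> 1"
    and "\<And>j. j \<in> {1..k} \<Longrightarrow> z j \<noteq> 1"
    and "\<And>j. j \<in> {1..k} \<Longrightarrow> m j \<ge> 1"
    and "n \<ge> 2"
    and "(\<Sum>j=1..k. m j) \<ge> k * n"
  shows "\<exists>\<zeta>. \<zeta> \<noteq> 1 \<and>
           deriv (\<lambda>w. (w - 1) ^ n * (\<Prod>j=1..k. (w - z j) ^ m j)) \<zeta> = 0 \<and>
           norm (\<zeta> - 1/2) \<le> 1/2"
proof -
  define K where "K = {1..k}"
  have finK: "finite K" and cardK: "card K = k" and Kne: "K \<noteq> {}"
    using assms(1) by (auto simp: K_def)
  define b where "b j = 1 / (z j - 1)" for j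
  have b0: "b j \<noteq> 0" if "j \<in> K" for j using assms(4) that by (simp add: b_def K_def)
  have zb: "z j = 1 + 1 / b j" if "j \<in> K" for j using assms(4) that by (simp add: b_def K_def)
  have binj: "b i \<noteq> b j" if "i \<in> K" "j \<in> K" "i \<noteq> j" for i j
  proof
    assume "b i = b j"
    then have "z i = z j" using zb that by simp
    then show False using assms(2) that unfolding K_def inj_on_def by blast
  qed
  have Reb: "Re (b j) \<le> -1/2" if "j \<in> K" for j
  proof -
    have "norm ((z j - 1) + 1) \<le> 1" using assms(3) that by (simp add: K_def)
    moreover have "z j - 1 \<noteq> 0" using assms(4) that by (simp add: K_def)
    ultimately show ?thesis unfolding b_def by (rule re_inv_le)
  qed
  define L where "L A = (\<Prod>i\<in>A. [:-b i,1:])" for A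
  have LK: "degree (L A) = card A \<and> coeff (L A) (card A) = 1 \<and>
         (A \<noteq> {} \<longrightarrow> coeff (L A) (card A - 1) = - (\<Sum>i\<in>A. b i))" if "finite A" for A
    unfolding L_def by (rule prod_lin_coeffs[OF that])
  define g where "g = smult (of_nat n) (L K) - (\<Sum>j\<in>K. smult (of_nat (m j) * b j) (L (K - {j})))"
  have cardKj: "card (K - {j}) = k - 1" if "j \<in> K" for j using that finK cardK by simp
  have coeffg_hi: "coeff g i = (if i = k then of_nat n else 0)" if "i \<ge> k" for i
  proof -
    have "coeff (L (K - {j})) i = 0" if "j \<in> K" for j
      using LK[of "K - {j}"] cardKj[OF that] finK \<open>i \<ge> k\<close> assms(1)
      by (intro coeff_eq_0) auto
    moreover have "coeff (L K) i = (if i = k then 1 else 0)"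
      using LK[OF finK] cardK \<open>i \<ge> k\<close> by (auto intro: coeff_eq_0)
    ultimately show ?thesis unfolding g_def by (simp add: coeff_sum)
  qed
  have degg: "degree g = k"
  proof (rule antisym)
    show "degree g \<le> k" using coeffg_hi by (intro degree_le) auto
    show "k \<le> degree g" using coeffg_hi[of k] assms(6) by (intro le_degree) auto
  qed
  have leadg: "lead_coeff g = of_nat n" using degg coeffg_hi[of k] by simp
  have coeffg_k1: "coeff g (k - 1) = - (of_nat n * (\<Sum>i\<in>K. b i)) - (\<Sum>j\<in>K. of_nat (m j) * b j)"
  proof -
    have "coeff (L (K - {j})) (k - 1) = 1" if "j \<in> K" for j
      using LK[of "K - {j}"] cardKj[OF that] finK by auto
    moreover have "coeff (L K) (k - 1) = - (\<Sum>i\<in>K. b i)"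
      using LK[OF finK] cardK Kne by auto
    ultimately show ?thesis unfolding g_def by (simp add: coeff_sum)
  qed
  obtain r where r: "smult (lead_coeff g) (\<Prod>i<degree g. [:-r i, 1:]) = g"
    using complex_poly_decompose' by blast
  have "coeff g (k - 1) = of_nat n * (- (\<Sum>i<k. r i))"
  proof -
    have "coeff (\<Prod>i<k. [:-r i, 1:]) (k - 1) = - (\<Sum>i<k. r i)"
      using prod_lin_coeffs[of "{..<k}" r] assms(1) by auto
    then show ?thesis using r degg leadg by (metis coeff_smult)
  qed
  then have sumr: "of_nat n * (\<Sum>i<k. r i) = (\<Sum>j\<in>K. (of_nat n + of_nat (m j)) * b j)"
    using coeffg_k1 by (simp add: sum.distrib sum_distrib_left algebra_simps)
  have "Re (of_nat n * (\<Sum>i<k. r i)) \<le> - (real k * real n)"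
  proof -
    have "Re (of_nat n * (\<Sum>i<k. r i)) = (\<Sum>j\<in>K. (real n + real (m j)) * Re (b j))"
      unfolding sumr by (simp add: Re_sum)
    also have "\<dots> \<le> (\<Sum>j\<in>K. (real n + real (m j)) * (-1/2))"
      by (intro sum_mono mult_left_mono Reb) auto
    also have "\<dots> = - (real k * real n + real (\<Sum>j\<in>K. m j)) / 2"
    proof -
      have "(\<Sum>j\<in>K. (real n + real (m j)) * (-1/2)) = (\<Sum>j\<in>K. (real n + real (m j))) * (-1/2)"
        by (rule sum_distrib_right[symmetric])
      also have "(\<Sum>j\<in>K. (real n + real (m j))) = real k * real n + real (\<Sum>j\<in>K. m j)"
        using cardK by (simp add: sum.distrib)
      finally show ?thesis by (simp add: field_simps)
    qed
    also have "\<dots> \<le> - (real k * real n)"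
    proof -
      have "real (k*n) \<le> real (\<Sum>j\<in>K. m j)" using assms(7) unfolding K_def by (rule of_nat_mono)
      then show ?thesis by simp
    qed
    finally show ?thesis .
  qed
  then have "real n * Re (\<Sum>i<k. r i) \<le> real n * (- real k)" by (simp add: mult.commute)
  then have "Re (\<Sum>i<k. r i) \<le> - real k" 
    by (rule mult_left_le_imp_le) (use assms(6) in simp)
  then have ReS: "(\<Sum>i<k. Re (r i)) \<le> - real k" by (simp add: Re_sum)
  obtain i0 where i0: "i0 < k" "Re (r i0) \<le> -1"
  proof (rule ccontr)
    assume "\<not> thesis"
    then have "\<forall>i<k. Re (r i) > -1" using that by force
    then have "(\<Sum>i<k. (-1::real)) < (\<Sum>i<k. Re (r i))"
      using assms(1) by (intro sum_strict_mono) (auto simp: lessThan_empty_iff)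
    then show False using ReS by simp
  qed
  define v where "v = r i0"
  have polyv: "poly g v = 0"
  proof -
    have "poly (\<Prod>i<k. [:-r i, 1:]) v = 0"
      unfolding poly_prod using i0(1) by (intro prod_zero) (auto simp: v_def)
    then show ?thesis using r degg by (metis poly_smult mult_zero_right)
  qed
  have v0: "v \<noteq> 0" using i0 by (auto simp: v_def)
  have vb: "v \<noteq> b j" if jK: "j \<in> K" for j
  proof
    assume vbj: "v = b j"
    have p1: "poly (L K) (b j) = 0"
      unfolding L_def poly_prod using jK finK by (intro prod_zero) auto
    have p2: "poly (L (K - {l})) (b j) = 0" if "l \<in> K - {j}" for l
      unfolding L_def poly_prod using jK finK that by (intro prod_zero) auto
    have p3: "poly (L (K - {j})) (b j) \<noteq> 0"
      unfolding L_def poly_prod using finK binj jK by (auto simp: prod_zero_iff)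
    have "poly g (b j) = - (\<Sum>l\<in>K. of_nat (m l) * b l * poly (L (K - {l})) (b j))"
      unfolding g_def using p1 by (simp add: poly_sum)
    also have "(\<Sum>l\<in>K. of_nat (m l) * b l * poly (L (K - {l})) (b j))
       = of_nat (m j) * b j * poly (L (K - {j})) (b j)"
      using p2 by (subst sum.remove[OF finK jK]) (auto intro!: sum.neutral)
    finally have "poly g (b j) \<noteq> 0"
      using p3 b0[OF jK] assms(5)[of j] jK by (auto simp: K_def)
    then show False using polyv vbj by simp
  qed
  define P where "P = (\<Prod>i\<in>K. (v - b i))"
  have P0: "P \<noteq> 0" unfolding P_def using finK vb by (auto simp: prod_zero_iff)
  have Prem: "(\<Prod>i\<in>K - {j}. (v - b i)) = P / (v - b j)" if "j \<in> K" for j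
    using prod.remove[OF finK that, of "\<lambda>i. v - b i"] vb[OF that] unfolding P_def
    by (simp add: field_simps)
  have "0 = of_nat n * P - (\<Sum>j\<in>K. of_nat (m j) * b j * (\<Prod>i\<in>K - {j}. (v - b i)))"
    using polyv unfolding g_def L_def P_def by (simp add: poly_sum poly_prod)
  also have "(\<Sum>j\<in>K. of_nat (m j) * b j * (\<Prod>i\<in>K - {j}. (v - b i)))
      = P * (\<Sum>j\<in>K. of_nat (m j) * b j / (v - b j))"
    unfolding sum_distrib_left by (intro sum.cong refl) (simp add: Prem)
  finally have key: "(\<Sum>j\<in>K. of_nat (m j) * b j / (v - b j)) = of_nat n"
    using P0 by (simp add: algebra_simps)
  define \<zeta> where "\<zeta> = 1 + 1 / v"
  have zz: "\<zeta> - z j \<noteq> 0" if "j \<in> K" for j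
  proof
    assume "\<zeta> - z j = 0"
    then have "1 / v = 1 / b j" using zb[OF that] unfolding \<zeta>_def by simp
    then show False using vb[OF that] by simp
  qed
  define Q where "Q u = (\<Prod>j\<in>K. (u - z j) ^ m j)" for u
  have dQ: "(Q has_field_derivative (Q \<zeta> * (\<Sum>j\<in>K. (of_nat (m j) * (\<zeta> - z j) ^ (m j - 1)) / (\<zeta> - z j) ^ m j))) (at \<zeta>)"
    unfolding Q_def
    by (rule has_field_derivative_prod'[where f = "\<lambda>j u. (u - z j) ^ m j"])
       (use zz in \<open>auto intro!: derivative_eq_intros\<close>)
  have S: "(\<Sum>j\<in>K. (of_nat (m j) * (\<zeta> - z j) ^ (m j - 1)) / (\<zeta> - z j) ^ m j)
      = (\<Sum>j\<in>K. of_nat (m j) / (\<zeta> - z j))"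
  proof (intro sum.cong refl)
    fix j assume jK: "j \<in> K"
    obtain q where q: "m j = Suc q" using assms(5)[of j] jK by (cases "m j") (auto simp: K_def)
    show "(of_nat (m j) * (\<zeta> - z j) ^ (m j - 1)) / (\<zeta> - z j) ^ m j = of_nat (m j) / (\<zeta> - z j)"
      using zz[OF jK] unfolding q by (simp add: field_simps)
  qed
  have S2: "(\<zeta> - 1) * (\<Sum>j\<in>K. of_nat (m j) / (\<zeta> - z j)) = - of_nat n"
  proof -
    have "(\<zeta> - 1) * (\<Sum>j\<in>K. of_nat (m j) / (\<zeta> - z j)) = (\<Sum>j\<in>K. - (of_nat (m j) * b j / (v - b j)))"
      unfolding sum_distrib_left
    proof (intro sum.cong refl)
      fix j assume jK: "j \<in> K"
      have "v - b j \<noteq> 0" "b j - v \<noteq> 0" using vb[OF jK] by auto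
      then show "(\<zeta> - 1) * (of_nat (m j) / (\<zeta> - z j)) = - (of_nat (m j) * b j / (v - b j))"
        unfolding \<zeta>_def zb[OF jK] using v0 b0[OF jK] by (simp add: field_simps)
    qed
    then show ?thesis using key by (simp add: sum_negf)
  qed
  have dF: "((\<lambda>w. (w - 1) ^ n * Q w) has_field_derivative
      (of_nat n * (\<zeta> - 1) ^ (n - 1) * Q \<zeta> + (\<zeta> - 1) ^ n * (Q \<zeta> * (\<Sum>j\<in>K. of_nat (m j) / (\<zeta> - z j))))) (at \<zeta>)"
    using dQ unfolding S by (auto intro!: derivative_eq_intros)
  have D0: "of_nat n * (\<zeta> - 1) ^ (n - 1) * Q \<zeta> + (\<zeta> - 1) ^ n * (Q \<zeta> * (\<Sum>j\<in>K. of_nat (m j) / (\<zeta> - z j))) = 0"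
  proof -
    obtain q where q: "n = Suc q" using assms(6) by (cases n) auto
    have "(\<zeta> - 1) ^ n * (Q \<zeta> * (\<Sum>j\<in>K. of_nat (m j) / (\<zeta> - z j)))
        = (\<zeta> - 1) ^ (n - 1) * Q \<zeta> * ((\<zeta> - 1) * (\<Sum>j\<in>K. of_nat (m j) / (\<zeta> - z j)))"
      unfolding q by (simp add: algebra_simps)
    then show ?thesis unfolding S2 by simp
  qed
  have "deriv (\<lambda>w. (w - 1) ^ n * (\<Prod>j=1..k. (w - z j) ^ m j)) \<zeta> = 0"
    using DERIV_imp_deriv[OF dF] D0 unfolding Q_def K_def by simp
  moreover have "\<zeta> \<noteq> 1" using v0 unfolding \<zeta>_def by simp
  moreover have "norm (\<zeta> - 1/2) \<le> 1/2" unfolding \<zeta>_def v_def by (rule disk[OF i0(2)])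
  ultimately show ?thesis by blast
qed

end
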